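(* Let $\vec{\mathcal G}=([n],E)$ be a directed graph with $m=|E|$ edges in which every vertex has at least one outgoing edge and which has a single strongly connected component. Let the weights $(r_{ij})_{(i,j)\in E}$ be independent absolutely continuous random variables with densities $f_{ij}$ satisfying $f_{ij}(y)\le\phi$ for all $(i,j)$ and $y$, for some $\phi>0$. Let $\delta=1/(2n^2m\phi)$. Then $$\mathbb P\bigl(\exists \text{ a cycle } C:\ B_1(r,\delta)\subseteq\mathcal P^{C}\bigr)\ge 1-\frac1n,$$ where $B_1(r,\delta)=\{\tilde r\in\mathbb R^m:\|r-\tilde r\|_1\le\delta\}$.
   Context: The mean weight of a directed cycle is the sum of its edge weights divided by its number of edges. For a directed cycle $C$, $\mathcal P^{C}$ is the set of $r\in\mathbb R^m$ such that $C$ is the unique cycle of minimum mean weight in $\vec{\mathcal G}$ with weights $r$. *)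

theory Defs
  imports "HOL-Probability.Probability"
begin

type_synonym edge = "nat \<times> nat"

text \<open>A directed cycle of the graph with edge set E, identified with its edge set:
  a nonempty list of distinct vertices v_0,...,v_{k-1} with edges (v_i, v_{i+1 mod k}) in E.\<close>
definition cycle_edges :: "nat list \<Rightarrow> edge set" where
  "cycle_edges vs = {(vs ! i, vs ! ((i + 1) mod length vs)) | i. i < length vs}"

definition is_cycle :: "edge set \<Rightarrow> edge set \<Rightarrow> bool" where
  "is_cycle E C \<longleftrightarrow> (\<exists>vs. vs \<noteq> [] \<and> distinct vs \<and> C = cycle_edges vs \<and> C \<subseteq> E)"

definition mean_weight :: "(edge \<Rightarrow> real) \<Rightarrow> edge set \<Rightarrow> real" where
  "mean_weight r C = (\<Sum>e\<in>C. r e) / real (card C)"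

definition PC :: "edge set \<Rightarrow> edge set \<Rightarrow> (edge \<Rightarrow> real) set" where
  "PC E C = {r. is_cycle E C \<and>
      (\<forall>C'. is_cycle E C' \<and> C' \<noteq> C \<longrightarrow> mean_weight r C < mean_weight r C')}"

text \<open>Closed l1-ball of radius d around r in R^E (only coordinates in E matter).\<close>
definition ball1 :: "edge set \<Rightarrow> (edge \<Rightarrow> real) \<Rightarrow> real \<Rightarrow> (edge \<Rightarrow> real) set" where
  "ball1 E r d = {r'. (\<Sum>e\<in>E. \<bar>r e - r' e\<bar>) \<le> d}"

end

theory Submission
  imports Defs
begin

lemma cycle_basic:
  assumes "is_cycle E C" "E \<subseteq> {..<n} \<times> {..<n}"
  shows "finite C" "C \<subseteq> E" "1 \<le> card C" "card C \<le> n"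
proof -
  obtain vs where vs: "vs \<noteq> []" "distinct vs" "C = cycle_edges vs" "C \<subseteq> E"
    using assms(1) unfolding is_cycle_def by blast
  have Cim: "C = (\<lambda>i. (vs ! i, vs ! ((i + 1) mod length vs))) ` {..<length vs}"
    using vs(3) unfolding cycle_edges_def by auto
  show fC: "finite C" using Cim by simp
  show "C \<subseteq> E" by fact
  have "(vs ! 0, vs ! ((0 + 1) mod length vs)) \<in> C" using Cim vs(1) by auto
  then have "C \<noteq> {}" by auto
  then show "1 \<le> card C" using fC by (simp add: Suc_le_eq card_gt_0_iff)
  have "set vs \<subseteq> {..<n}"
  proof
    fix v assume "v \<in> set vs"
    then obtain i where i: "i < length vs" "v = vs ! i" by (auto simp: in_set_conv_nth)
    then have "(vs ! i, vs ! ((i + 1) mod length vs)) \<in> E" using Cim vs(4) by auto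
    then show "v \<in> {..<n}" using assms(2) i by auto
  qed
  then have "length vs \<le> n" using vs(2) card_mono[of "{..<n}" "set vs"] distinct_card[of vs] by auto
  moreover have "card C \<le> length vs" using Cim card_image_le[of "{..<length vs}"] by auto
  ultimately show "card C \<le> n" by simp
qed

lemma mw_diff:
  assumes "C \<subseteq> E" "finite E"
  shows "mean_weight r' C - mean_weight r C =
    (\<Sum>e\<in>E. (r' e - r e) * (if e \<in> C then 1 / real (card C) else 0))"
proof -
  have "(\<Sum>e\<in>E. (r' e - r e) * (if e \<in> C then 1 / real (card C) else 0))
      = (\<Sum>e\<in>E. if e \<in> C then (r' e - r e) / real (card C) else 0)"
    by (intro sum.cong) auto
  also have "\<dots> = (\<Sum>e\<in>E \<inter> C. (r' e - r e) / real (card C))"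
    by (rule sum.inter_restrict[symmetric]) (use assms in auto)
  also have "E \<inter> C = C" using assms by auto
  also have "(\<Sum>e\<in>C. (r' e - r e) / real (card C)) = mean_weight r' C - mean_weight r C"
    unfolding mean_weight_def by (simp add: sum_divide_distrib[symmetric] sum_subtractf diff_divide_distrib)
  finally show ?thesis by simp
qed

lemma mw_cong:
  assumes "\<And>e. e \<in> C \<Longrightarrow> r e = r' e"
  shows "mean_weight r C = mean_weight r' C"
  unfolding mean_weight_def using assms by (simp cong: sum.cong)

lemma mw_upd_in:
  assumes "e \<in> C" "finite C"
  shows "mean_weight (y(e := t')) C = mean_weight (y(e := t)) C + (t' - t) / real (card C)"
proof -
  have "sum (y(e := t')) C = t' + sum y (C - {e})" using assms
    by (simp add: sum.remove)
  moreover have "sum (y(e := t)) C = t + sum y (C - {e})" using assms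
    by (simp add: sum.remove)
  ultimately show ?thesis unfolding mean_weight_def by (simp add: diff_divide_distrib[symmetric] add_divide_distrib[symmetric])
qed


lemma cycle_exists:
  assumes E: "E \<subseteq> {..<n} \<times> {..<n}" and n: "n \<ge> 1" and out: "\<forall>i<n. \<exists>j. (i, j) \<in> E"
  shows "\<exists>C. is_cycle E C"
proof -
  define s where "s v = (SOME j. (v, j) \<in> E)" for v
  have s: "(v, s v) \<in> E" if "v < n" for v
    using out that unfolding s_def by (meson someI_ex)
  define w where "w k = (s ^^ k) 0" for k
  have wlt: "w k < n" for k
  proof (induction k)
    case 0 then show ?case using n by (simp add: w_def)
  next
    case (Suc k) then show ?case using s[of "w k"] E by (auto simp: w_def)
  qed
  have wE: "(w m, w (Suc m)) \<in> E" for m using s[OF wlt[of m]] by (simp add: w_def)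
  have "\<not> inj_on w {..n}"
  proof
    assume "inj_on w {..n}"
    then have "card (w ` {..n}) = Suc n" by (simp add: card_image)
    moreover have "card (w ` {..n}) \<le> n" using card_mono[of "{..<n}" "w ` {..n}"] wlt by auto
    ultimately show False by simp
  qed
  then obtain a b where ab: "a \<noteq> b" "w a = w b" unfolding inj_on_def by blast
  have ex: "\<exists>j. \<exists>i<j. w i = w j"
  proof (cases "a < b")
    case True then show ?thesis using ab by blast
  next
    case False then have "b < a" using ab by simp
    then show ?thesis using ab by metis
  qed
  define j where "j = (LEAST j. \<exists>i<j. w i = w j)"
  have "\<exists>i<j. w i = w j" unfolding j_def by (rule LeastI_ex[OF ex])
  then obtain i where ij: "i < j" "w i = w j" by blast
  have mini: "w x \<noteq> w y" if "x < y" "y < j" for x y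
  proof
    assume "w x = w y"
    then have "\<exists>i<y. w i = w y" using that by blast
    then have "j \<le> y" unfolding j_def by (rule Least_le)
    then show False using that by simp
  qed
  define vs where "vs = map w [i..<j]"
  have L: "length vs = j - i" by (simp add: vs_def)
  have nth: "vs ! k = w (i + k)" if "k < j - i" for k using that by (simp add: vs_def)
  have "distinct vs" unfolding vs_def distinct_map
  proof
    show "inj_on w (set [i..<j])"
    proof (rule inj_onI)
      fix x y assume "x \<in> set [i..<j]" "y \<in> set [i..<j]" "w x = w y"
      then show "x = y" using mini[of x y] mini[of y x] by (metis atLeastLessThan_iff linorder_neqE_nat set_upt)
    qed
  qed simp
  moreover have "vs \<noteq> []" using ij by (simp add: vs_def)
  moreover have "cycle_edges vs \<subseteq> E"
  proof
    fix p assume "p \<in> cycle_edges vs"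
    then obtain k where k: "k < length vs" "p = (vs ! k, vs ! ((k + 1) mod length vs))"
      unfolding cycle_edges_def by blast
    show "p \<in> E"
    proof (cases "k + 1 < j - i")
      case True
      then have "p = (w (i + k), w (Suc (i + k)))" using k L nth by auto
      then show ?thesis using wE by simp
    next
      case False
      then have "k + 1 = j - i" using k L by simp
      then have "p = (w (i + k), w i)" using k L nth ij by auto
      moreover have "Suc (i + k) = j" using \<open>k + 1 = j - i\<close> ij by simp
      ultimately show ?thesis using wE[of "i + k"] ij by simp
    qed
  qed
  ultimately show ?thesis unfolding is_cycle_def by blast
qed

lemma cycles_finite:
  assumes "finite E" shows "finite {C. is_cycle E C}"
proof -
  have "{C. is_cycle E C} \<subseteq> Pow E" unfolding is_cycle_def by auto
  then show ?thesis using assms finite_subset by blast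
qed


definition coef :: "edge set \<Rightarrow> edge set \<Rightarrow> edge \<Rightarrow> real" where
  "coef C C' e = (if e \<in> C' then 1 / real (card C') else 0) - (if e \<in> C then 1 / real (card C) else 0)"

definition Kc :: "edge set \<Rightarrow> edge set \<Rightarrow> edge set \<Rightarrow> real" where
  "Kc E C C' = Max ((\<lambda>e. \<bar>coef C C' e\<bar>) ` E)"

lemma coef_le1: "\<bar>coef C C' e\<bar> \<le> 1"
proof -
  have a: "0 \<le> (if e \<in> C' then 1 / real (card C') else 0)" "(if e \<in> C' then 1 / real (card C') else 0) \<le> 1"
    by (auto simp: divide_le_eq)
  have b: "0 \<le> (if e \<in> C then 1 / real (card C) else 0)" "(if e \<in> C then 1 / real (card C) else 0) \<le> 1"
    by (auto simp: divide_le_eq)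
  show ?thesis unfolding coef_def using a b by linarith
qed

lemma Kc_le1: "finite E \<Longrightarrow> E \<noteq> {} \<Longrightarrow> Kc E C C' \<le> 1"
  unfolding Kc_def using coef_le1 by (subst Max_le_iff) auto

lemma mw_diff2:
  assumes "C \<subseteq> E" "C' \<subseteq> E" "finite E"
  shows "mean_weight r' C' - mean_weight r' C =
     (mean_weight r C' - mean_weight r C) + (\<Sum>e\<in>E. (r' e - r e) * coef C C' e)"
proof -
  have "(\<Sum>e\<in>E. (r' e - r e) * coef C C' e) =
     (\<Sum>e\<in>E. (r' e - r e) * (if e \<in> C' then 1 / real (card C') else 0)) -
     (\<Sum>e\<in>E. (r' e - r e) * (if e \<in> C then 1 / real (card C) else 0))"
    unfolding coef_def by (simp add: right_diff_distrib sum_subtractf)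
  then show ?thesis using mw_diff[OF assms(1,3), of r' r] mw_diff[OF assms(2,3), of r' r] by simp
qed

lemma char_pair:
  assumes "C \<subseteq> E" "C' \<subseteq> E" "finite E" "E \<noteq> {}" "\<delta> \<ge> 0"
  shows "(\<forall>r'\<in>ball1 E r \<delta>. mean_weight r' C < mean_weight r' C') \<longleftrightarrow>
         \<delta> * Kc E C C' < mean_weight r C' - mean_weight r C"
proof
  assume H: "\<forall>r'\<in>ball1 E r \<delta>. mean_weight r' C < mean_weight r' C'"
  obtain e0 where e0: "e0 \<in> E" "\<bar>coef C C' e0\<bar> = Kc E C C'"
  proof -
    have "Max ((\<lambda>e. \<bar>coef C C' e\<bar>) ` E) \<in> (\<lambda>e. \<bar>coef C C' e\<bar>) ` E"
      using assms(3,4) by (intro Max_in) auto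
    then show ?thesis using that unfolding Kc_def by auto
  qed
  define r' where "r' = r(e0 := r e0 - sgn (coef C C' e0) * \<delta>)"
  have d: "r' e - r e = (if e = e0 then - sgn (coef C C' e0) * \<delta> else 0)" for e
    by (simp add: r'_def)
  have "(\<Sum>e\<in>E. \<bar>r e - r' e\<bar>) = (\<Sum>e\<in>E. if e = e0 then \<bar>sgn (coef C C' e0)\<bar> * \<delta> else 0)"
    by (intro sum.cong) (auto simp: r'_def abs_mult assms(5))
  also have "\<dots> = \<bar>sgn (coef C C' e0)\<bar> * \<delta>" using e0 assms(3) by simp
  also have "\<dots> \<le> \<delta>" using assms(5) by (auto simp: abs_sgn_eq)
  finally have "r' \<in> ball1 E r \<delta>" unfolding ball1_def by simp
  then have lt: "mean_weight r' C < mean_weight r' C'" using H by blast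
  have "(\<Sum>e\<in>E. (r' e - r e) * coef C C' e) = (\<Sum>e\<in>E. if e = e0 then - sgn (coef C C' e0) * \<delta> * coef C C' e0 else 0)"
    by (intro sum.cong) (auto simp: d)
  also have "\<dots> = - \<delta> * (coef C C' e0 * sgn (coef C C' e0))" using e0 assms(3) by (simp add: mult.commute mult.left_commute)
  also have "coef C C' e0 * sgn (coef C C' e0) = \<bar>coef C C' e0\<bar>" by (simp add: sgn_if)
  finally have "(\<Sum>e\<in>E. (r' e - r e) * coef C C' e) = - \<delta> * Kc E C C'" using e0 by simp
  then show "\<delta> * Kc E C C' < mean_weight r C' - mean_weight r C"
    using mw_diff2[OF assms(1-3), of r' r] lt by simp
next
  assume H: "\<delta> * Kc E C C' < mean_weight r C' - mean_weight r C"
  show "\<forall>r'\<in>ball1 E r \<delta>. mean_weight r' C < mean_weight r' C'"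
  proof
    fix r' assume "r' \<in> ball1 E r \<delta>"
    then have b: "(\<Sum>e\<in>E. \<bar>r e - r' e\<bar>) \<le> \<delta>" unfolding ball1_def by simp
    have K0: "0 \<le> Kc E C C'" unfolding Kc_def using assms(3,4)
      by (meson Max_ge abs_ge_zero all_not_in_conv finite_imageI image_eqI order_trans)
    have "\<bar>\<Sum>e\<in>E. (r' e - r e) * coef C C' e\<bar> \<le> (\<Sum>e\<in>E. \<bar>(r' e - r e) * coef C C' e\<bar>)"
      by (rule sum_abs)
    also have "\<dots> \<le> (\<Sum>e\<in>E. \<bar>r e - r' e\<bar> * Kc E C C')"
    proof (rule sum_mono)
      fix e assume "e \<in> E"
      then have "\<bar>coef C C' e\<bar> \<le> Kc E C C'" unfolding Kc_def using assms(3) by simp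
      then show "\<bar>(r' e - r e) * coef C C' e\<bar> \<le> \<bar>r e - r' e\<bar> * Kc E C C'"
        by (simp add: abs_mult abs_minus_commute mult_left_mono)
    qed
    also have "\<dots> = (\<Sum>e\<in>E. \<bar>r e - r' e\<bar>) * Kc E C C'" by (simp add: sum_distrib_right)
    also have "\<dots> \<le> \<delta> * Kc E C C'" using b K0 by (simp add: mult_right_mono)
    finally show "mean_weight r' C < mean_weight r' C'"
      using mw_diff2[OF assms(1-3), of r' r] H by linarith
  qed
qed

lemma char_good:
  assumes "finite E" "E \<noteq> {}" "\<delta> \<ge> 0"
  shows "ball1 E r \<delta> \<subseteq> PC E C \<longleftrightarrow>
    is_cycle E C \<and> (\<forall>C'\<in>{C. is_cycle E C}. C' \<noteq> C \<longrightarrow> \<delta> * Kc E C C' < mean_weight r C' - mean_weight r C)"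
proof
  assume H: "ball1 E r \<delta> \<subseteq> PC E C"
  have "r \<in> ball1 E r \<delta>" unfolding ball1_def using assms(3) by simp
  then have cyc: "is_cycle E C" using H unfolding PC_def by auto
  have "\<delta> * Kc E C C' < mean_weight r C' - mean_weight r C" if "is_cycle E C'" "C' \<noteq> C" for C'
  proof -
    have "\<forall>r'\<in>ball1 E r \<delta>. mean_weight r' C < mean_weight r' C'" using H that unfolding PC_def by blast
    then show ?thesis using char_pair[of C E C' \<delta> r] cyc that assms unfolding is_cycle_def by blast
  qed
  then show "is_cycle E C \<and> (\<forall>C'\<in>{C. is_cycle E C}. C' \<noteq> C \<longrightarrow> \<delta> * Kc E C C' < mean_weight r C' - mean_weight r C)"
    using cyc by blast
next
  assume H: "is_cycle E C \<and> (\<forall>C'\<in>{C. is_cycle E C}. C' \<noteq> C \<longrightarrow> \<delta> * Kc E C C' < mean_weight r C' - mean_weight r C)"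
  show "ball1 E r \<delta> \<subseteq> PC E C"
  proof
    fix r' assume r': "r' \<in> ball1 E r \<delta>"
    have "mean_weight r' C < mean_weight r' C'" if "is_cycle E C'" "C' \<noteq> C" for C'
      using char_pair[of C E C' \<delta> r] H that assms r' unfolding is_cycle_def by blast
    then show "r' \<in> PC E C" unfolding PC_def using H by blast
  qed
qed


definition Cn :: "edge set \<Rightarrow> edge \<Rightarrow> edge set set" where
  "Cn E e = {C. is_cycle E C \<and> e \<notin> C}"
definition Ce :: "edge set \<Rightarrow> edge \<Rightarrow> edge set set" where
  "Ce E e = {C. is_cycle E C \<and> e \<in> C}"

definition badp :: "edge set \<Rightarrow> real \<Rightarrow> edge \<Rightarrow> (edge \<Rightarrow> real) \<Rightarrow> bool" where
  "badp E \<delta> e r \<longleftrightarrow> Cn E e \<noteq> {} \<and> Ce E e \<noteq> {} \<and>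
     \<bar>Min (mean_weight r ` Cn E e) - Min (mean_weight r ` Ce E e)\<bar> \<le> \<delta>"

lemma bad_cover:
  assumes fin: "finite E" and ne: "E \<noteq> {}" and d: "\<delta> \<ge> 0" and ex: "\<exists>C. is_cycle E C"
    and nb: "\<not> (\<exists>C. is_cycle E C \<and> ball1 E r \<delta> \<subseteq> PC E C)"
  shows "\<exists>e\<in>E. badp E \<delta> e r"
proof -
  define Cy where "Cy = {C. is_cycle E C}"
  have fCy: "finite Cy" unfolding Cy_def by (rule cycles_finite[OF fin])
  have neCy: "Cy \<noteq> {}" using ex unfolding Cy_def by auto
  have "Min (mean_weight r ` Cy) \<in> mean_weight r ` Cy" using fCy neCy by (intro Min_in) auto
  then obtain C0 where C0: "C0 \<in> Cy" "mean_weight r C0 = Min (mean_weight r ` Cy)" by auto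
  have C0min: "mean_weight r C0 \<le> mean_weight r C" if "C \<in> Cy" for C
    using C0 fCy that by simp
  have "\<not> ball1 E r \<delta> \<subseteq> PC E C0" using nb C0 unfolding Cy_def by blast
  then obtain C' where C': "C' \<in> Cy" "C' \<noteq> C0" "\<not> \<delta> * Kc E C0 C' < mean_weight r C' - mean_weight r C0"
    using char_good[OF fin ne d, of r C0] C0(1) unfolding Cy_def by blast
  have "\<delta> * Kc E C0 C' \<le> \<delta>" using Kc_le1[OF fin ne] d by (simp add: mult_left_le)
  then have close: "mean_weight r C' \<le> mean_weight r C0 + \<delta>" using C' by linarith
  have sub: "C0 \<subseteq> E" "C' \<subseteq> E" using C0(1) C'(1) unfolding Cy_def is_cycle_def by auto
  obtain e where e: "e \<in> E" "(e \<in> C0 \<and> e \<notin> C') \<or> (e \<in> C' \<and> e \<notin> C0)"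
    using C'(2) sub by blast
  have fn: "finite (Cn E e)" "finite (Ce E e)"
    using fCy unfolding Cn_def Ce_def Cy_def by (auto intro: finite_subset)
  have lbn: "mean_weight r C0 \<le> Min (mean_weight r ` Cn E e)" if "Cn E e \<noteq> {}"
    using fn that C0min unfolding Cn_def Cy_def by (subst Min_ge_iff) auto
  have lbe: "mean_weight r C0 \<le> Min (mean_weight r ` Ce E e)" if "Ce E e \<noteq> {}"
    using fn that C0min unfolding Ce_def Cy_def by (subst Min_ge_iff) auto
  from e(2) show ?thesis
  proof
    assume a: "e \<in> C0 \<and> e \<notin> C'"
    have in1: "C0 \<in> Ce E e" "C' \<in> Cn E e" using a C0(1) C'(1) unfolding Ce_def Cn_def Cy_def by auto
    have "Min (mean_weight r ` Ce E e) \<le> mean_weight r C0" using fn in1 by simp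
    moreover have "Min (mean_weight r ` Cn E e) \<le> mean_weight r C'" using fn in1 by simp
    moreover have ne2: "Cn E e \<noteq> {}" "Ce E e \<noteq> {}" using in1 by auto
    moreover note lbn[OF ne2(1)] lbe[OF ne2(2)]
    ultimately have "\<bar>Min (mean_weight r ` Cn E e) - Min (mean_weight r ` Ce E e)\<bar> \<le> \<delta>"
      using close d by (simp add: abs_le_iff)
    then show ?thesis using ne2 e(1) unfolding badp_def by blast
  next
    assume a: "e \<in> C' \<and> e \<notin> C0"
    have in1: "C0 \<in> Cn E e" "C' \<in> Ce E e" using a C0(1) C'(1) unfolding Ce_def Cn_def Cy_def by auto
    have "Min (mean_weight r ` Cn E e) \<le> mean_weight r C0" using fn in1 by simp
    moreover have "Min (mean_weight r ` Ce E e) \<le> mean_weight r C'" using fn in1 by simp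
    moreover have ne2: "Cn E e \<noteq> {}" "Ce E e \<noteq> {}" using in1 by auto
    moreover note lbn[OF ne2(1)] lbe[OF ne2(2)]
    ultimately have "\<bar>Min (mean_weight r ` Cn E e) - Min (mean_weight r ` Ce E e)\<bar> \<le> \<delta>"
      using close d by (simp add: abs_le_iff)
    then show ?thesis using ne2 e(1) unfolding badp_def by blast
  qed
qed

lemma bad_diam:
  assumes E: "E \<subseteq> {..<n} \<times> {..<n}" and fin: "finite E"
    and t: "badp E \<delta> e (y(e := t))" and t': "badp E \<delta> e (y(e := t'))" and le: "t \<le> t'"
  shows "t' - t \<le> 2 * real n * \<delta>"
proof -
  have fn: "finite (Cn E e)" "finite (Ce E e)"
    using cycles_finite[OF fin] unfolding Cn_def Ce_def by (auto intro: finite_subset)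
  have neq: "Cn E e \<noteq> {}" "Ce E e \<noteq> {}" using t unfolding badp_def by auto
  have A: "mean_weight (y(e := t)) C = mean_weight (y(e := t')) C" if "C \<in> Cn E e" for C
    using that unfolding Cn_def by (intro mw_cong) auto
  then have Aeq: "mean_weight (y(e := t)) ` Cn E e = mean_weight (y(e := t')) ` Cn E e"
    by (auto simp: image_def)
  have n0: "real n > 0"
  proof -
    obtain C where "C \<in> Ce E e" using neq by auto
    then have "1 \<le> card C" "card C \<le> n" using cycle_basic[OF _ E] unfolding Ce_def by auto
    then show ?thesis by simp
  qed
  have "Min (mean_weight (y(e := t')) ` Ce E e) \<in> mean_weight (y(e := t')) ` Ce E e"
    using fn neq by (intro Min_in) auto
  then obtain Cs where Cs: "Cs \<in> Ce E e" "mean_weight (y(e := t')) Cs = Min (mean_weight (y(e := t')) ` Ce E e)"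
    by auto
  have cb: "finite Cs" "1 \<le> card Cs" "card Cs \<le> n" "e \<in> Cs"
    using cycle_basic[OF _ E] Cs(1) unfolding Ce_def by auto
  have "mean_weight (y(e := t')) Cs = mean_weight (y(e := t)) Cs + (t' - t) / real (card Cs)"
    using mw_upd_in[OF cb(4,1)] .
  moreover have "(t' - t) / real n \<le> (t' - t) / real (card Cs)"
    using cb le by (intro divide_left_mono) auto
  moreover have "Min (mean_weight (y(e := t)) ` Ce E e) \<le> mean_weight (y(e := t)) Cs"
    using fn Cs by simp
  ultimately have "Min (mean_weight (y(e := t)) ` Ce E e) + (t' - t) / real n \<le> Min (mean_weight (y(e := t')) ` Ce E e)"
    using Cs(2) by linarith
  moreover have "\<bar>Min (mean_weight (y(e := t)) ` Cn E e) - Min (mean_weight (y(e := t)) ` Ce E e)\<bar> \<le> \<delta>"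
    using t unfolding badp_def by simp
  moreover have "\<bar>Min (mean_weight (y(e := t)) ` Cn E e) - Min (mean_weight (y(e := t')) ` Ce E e)\<bar> \<le> \<delta>"
    using t' Aeq unfolding badp_def by simp
  ultimately have "(t' - t) / real n \<le> 2 * \<delta>" by (simp add: abs_le_iff)
  then show ?thesis using n0 by (simp add: divide_le_eq algebra_simps)
qed


lemma diam_measure:
  assumes T: "T \<in> sets borel" and diam: "\<And>t t'. t \<in> T \<Longrightarrow> t' \<in> T \<Longrightarrow> t \<le> t' \<Longrightarrow> t' - t \<le> d"
    and d: "d \<ge> 0"
  shows "emeasure lborel T \<le> ennreal d"
proof (cases "T = {}")
  case True then show ?thesis by simp
next
  case False
  then obtain t0 where t0: "t0 \<in> T" by auto
  have lb: "t0 - d \<le> t" if "t \<in> T" for t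
    using diam[OF t0 that] diam[OF that t0] d by (cases "t0 \<le> t") auto
  have bdd: "bdd_below T" using lb by (intro bdd_belowI) auto
  have sub: "T \<subseteq> {Inf T .. Inf T + d}"
  proof
    fix t assume t: "t \<in> T"
    have "Inf T \<le> t" using t bdd by (intro cInf_lower)
    moreover have "t - d \<le> Inf T"
    proof (rule cInf_greatest[OF False])
      fix t' assume "t' \<in> T"
      then show "t - d \<le> t'" using diam[OF t \<open>t' \<in> T\<close>] diam[OF \<open>t' \<in> T\<close> t] d by (cases "t \<le> t'") auto
    qed
    ultimately show "t \<in> {Inf T .. Inf T + d}" by simp
  qed
  have "emeasure lborel T \<le> emeasure lborel {Inf T .. Inf T + d}"
    by (rule emeasure_mono[OF sub]) simp
  also have "\<dots> = ennreal d" using d by simp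
  finally show ?thesis .
qed

lemma dens_bound:
  assumes dist: "distributed M lborel Z g" and gb: "\<And>y. g y \<le> ennreal \<phi>" and phi: "\<phi> \<ge> 0"
    and T: "T \<in> sets borel" and Tm: "emeasure lborel T \<le> ennreal d" and d: "d \<ge> 0"
  shows "emeasure (distr M borel Z) T \<le> ennreal (\<phi> * d)"
proof -
  have "distr M borel Z = distr M lborel Z" by (rule distr_cong) auto
  also have "\<dots> = density lborel g" using dist by (simp add: distributed_def)
  finally have eq: "distr M borel Z = density lborel g" .
  have gm: "g \<in> borel_measurable lborel" using dist by (simp add: distributed_def)
  have "emeasure (density lborel g) T = (\<integral>\<^sup>+x. g x * indicator T x \<partial>lborel)"
    using T gm by (simp add: emeasure_density)
  also have "\<dots> \<le> (\<integral>\<^sup>+x. ennreal \<phi> * indicator T x \<partial>lborel)"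
    by (intro nn_integral_mono mult_right_mono gb) auto
  also have "\<dots> = ennreal \<phi> * emeasure lborel T" using T by (simp add: nn_integral_cmult_indicator)
  also have "\<dots> \<le> ennreal \<phi> * ennreal d" by (intro mult_left_mono Tm) auto
  also have "\<dots> = ennreal (\<phi> * d)" using phi d by (simp add: ennreal_mult)
  finally show ?thesis using eq by simp
qed

lemma badp_cong:
  assumes "\<And>x. x \<in> E \<Longrightarrow> r x = r' x"
  shows "badp E \<delta> e r = badp E \<delta> e r'"
proof -
  have "mean_weight r C = mean_weight r' C" if "is_cycle E C" for C
    using that assms unfolding is_cycle_def by (intro mw_cong) auto
  then have "mean_weight r ` Cn E e = mean_weight r' ` Cn E e" "mean_weight r ` Ce E e = mean_weight r' ` Ce E e"
    unfolding Cn_def Ce_def by (auto simp: image_def)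
  then show ?thesis unfolding badp_def by simp
qed


lemma mw_meas_pair:
  assumes "C \<subseteq> E"
  shows "(\<lambda>p. mean_weight ((fst p)(e := snd p e)) C) \<in>
     borel_measurable (PiM (E - {e}) (\<lambda>_. borel) \<Otimes>\<^sub>M PiM {e} (\<lambda>_. borel :: real measure))"
proof -
  have "(\<lambda>p. ((fst p)(e := snd p e)) x) \<in>
     borel_measurable (PiM (E - {e}) (\<lambda>_. borel) \<Otimes>\<^sub>M PiM {e} (\<lambda>_. borel :: real measure))" if "x \<in> C" for x
  proof (cases "x = e")
    case True then show ?thesis by simp
  next
    case False
    then have "x \<in> E - {e}" using that assms by auto
    then have "(\<lambda>p. fst p x) \<in> borel_measurable (PiM (E - {e}) (\<lambda>_. borel) \<Otimes>\<^sub>M PiM {e} (\<lambda>_. borel :: real measure))"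
      by measurable
    then show ?thesis using False by simp
  qed
  then show ?thesis unfolding mean_weight_def by measurable
qed

lemma badp_meas_pair:
  assumes fin: "finite E"
  shows "{p \<in> space (PiM (E - {e}) (\<lambda>_. borel) \<Otimes>\<^sub>M PiM {e} (\<lambda>_. borel :: real measure)). badp E \<delta> e ((fst p)(e := snd p e))}
     \<in> sets (PiM (E - {e}) (\<lambda>_. borel) \<Otimes>\<^sub>M PiM {e} (\<lambda>_. borel :: real measure))"
proof -
  let ?N = "PiM (E - {e}) (\<lambda>_. borel) \<Otimes>\<^sub>M PiM {e} (\<lambda>_. borel :: real measure)"
  have fn: "finite (Cn E e)" "finite (Ce E e)"
    using cycles_finite[OF fin] unfolding Cn_def Ce_def by (auto intro: finite_subset)
  have m1: "(\<lambda>p. Min ((\<lambda>C. mean_weight ((fst p)(e := snd p e)) C) ` Cn E e)) \<in> borel_measurable ?N"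
    using fn by (intro borel_measurable_Min mw_meas_pair) (auto simp: Cn_def is_cycle_def)
  have m2: "(\<lambda>p. Min ((\<lambda>C. mean_weight ((fst p)(e := snd p e)) C) ` Ce E e)) \<in> borel_measurable ?N"
    using fn by (intro borel_measurable_Min mw_meas_pair) (auto simp: Ce_def is_cycle_def)
  have "(\<lambda>p. \<bar>Min ((\<lambda>C. mean_weight ((fst p)(e := snd p e)) C) ` Cn E e) -
        Min ((\<lambda>C. mean_weight ((fst p)(e := snd p e)) C) ` Ce E e)\<bar>) \<in> borel_measurable ?N"
    using m1 m2 by measurable
  then have "{p \<in> space ?N. \<bar>Min ((\<lambda>C. mean_weight ((fst p)(e := snd p e)) C) ` Cn E e) -
        Min ((\<lambda>C. mean_weight ((fst p)(e := snd p e)) C) ` Ce E e)\<bar> \<le> \<delta>} \<in> sets ?N"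
    by measurable
  then have "{p \<in> space ?N. Cn E e \<noteq> {} \<and> Ce E e \<noteq> {} \<and> \<bar>Min ((\<lambda>C. mean_weight ((fst p)(e := snd p e)) C) ` Cn E e) -
        Min ((\<lambda>C. mean_weight ((fst p)(e := snd p e)) C) ` Ce E e)\<bar> \<le> \<delta>} \<in> sets ?N"
    by (cases "Cn E e \<noteq> {} \<and> Ce E e \<noteq> {}") auto
  then show ?thesis unfolding badp_def by simp
qed


lemma prob_bad_edge:
  fixes M :: "'a measure" and X :: "edge \<Rightarrow> 'a \<Rightarrow> real"
  assumes P: "prob_space M"
    and indep: "prob_space.indep_vars M (\<lambda>_. borel) X E"
    and dens: "\<forall>e\<in>E. distributed M lborel (X e) (f e)"
    and bound: "\<forall>e\<in>E. \<forall>y. f e y \<le> ennreal \<phi>"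
    and phi: "\<phi> \<ge> 0"
    and Esub: "E \<subseteq> {..<n} \<times> {..<n}" and fin: "finite E" and e: "e \<in> E" and d: "\<delta> \<ge> 0"
  shows "emeasure M {\<omega> \<in> space M. badp E \<delta> e (\<lambda>e'. X e' \<omega>)} \<le> ennreal (\<phi> * (2 * real n * \<delta>))"
proof -
  interpret prob_space M by (rule P)
  define R where "R = E - {e}"
  define N where "N = PiM R (\<lambda>_. borel :: real measure)"
  define K where "K = PiM {e} (\<lambda>_. borel :: real measure)"
  define Y where "Y = (\<lambda>\<omega>. restrict (\<lambda>i. X i \<omega>) R)"
  define Z where "Z = (\<lambda>\<omega>. restrict (\<lambda>i. X i \<omega>) {e})"
  have iv: "indep_var N Y K Z"
    unfolding N_def Y_def R_def K_def Z_def by (rule indep_var_restrict[OF indep]) (use e in auto)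
  then have rvY: "random_variable N Y" and rvZ: "random_variable K Z"
    and deq: "distr M N Y \<Otimes>\<^sub>M distr M K Z = distr M (N \<Otimes>\<^sub>M K) (\<lambda>x. (Y x, Z x))"
    unfolding indep_var_distribution_eq by auto
  have rvX: "random_variable borel (X e)" using dens e by (auto simp: distributed_def)
  define S where "S = {p \<in> space (N \<Otimes>\<^sub>M K). badp E \<delta> e ((fst p)(e := snd p e))}"
  have Sm: "S \<in> sets (N \<Otimes>\<^sub>M K)" unfolding S_def N_def R_def K_def by (rule badp_meas_pair[OF fin])
  have pm: "(\<lambda>x. (Y x, Z x)) \<in> measurable M (N \<Otimes>\<^sub>M K)" using rvY rvZ by (rule measurable_Pair)
  have seteq: "{\<omega> \<in> space M. badp E \<delta> e (\<lambda>e'. X e' \<omega>)} = (\<lambda>x. (Y x, Z x)) -` S \<inter> space M"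
  proof -
    have "badp E \<delta> e (\<lambda>e'. X e' \<omega>) = badp E \<delta> e ((Y \<omega>)(e := Z \<omega> e))" for \<omega>
      by (rule badp_cong) (auto simp: Y_def R_def Z_def)
    moreover have "(Y \<omega>, Z \<omega>) \<in> space (N \<Otimes>\<^sub>M K)" if "\<omega> \<in> space M" for \<omega>
      using measurable_space[OF pm that] .
    ultimately show ?thesis unfolding S_def by auto
  qed
  interpret PZ: prob_space "distr M K Z" by (rule prob_space_distr[OF rvZ])
  interpret PY: prob_space "distr M N Y" by (rule prob_space_distr[OF rvY])
  define g where "g = (\<lambda>t::real. restrict (\<lambda>_. t) {e})"
  have gm: "g \<in> measurable borel K" unfolding g_def K_def by measurable
  have Zg: "Z \<omega> = g (X e \<omega>)" for \<omega> by (auto simp: Z_def g_def fun_eq_iff)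
  have "emeasure M {\<omega> \<in> space M. badp E \<delta> e (\<lambda>e'. X e' \<omega>)} = emeasure (distr M (N \<Otimes>\<^sub>M K) (\<lambda>x. (Y x, Z x))) S"
    using seteq by (simp add: emeasure_distr[OF pm Sm])
  also have "\<dots> = emeasure (distr M N Y \<Otimes>\<^sub>M distr M K Z) S" using deq by simp
  also have "\<dots> = (\<integral>\<^sup>+y. emeasure (distr M K Z) (Pair y -` S) \<partial>distr M N Y)"
    by (rule PZ.emeasure_pair_measure_alt) (use Sm in simp)
  also have "\<dots> \<le> (\<integral>\<^sup>+y. ennreal (\<phi> * (2 * real n * \<delta>)) \<partial>distr M N Y)"
  proof (rule nn_integral_mono)
    fix y
    have T's: "Pair y -` S \<in> sets K"
    proof -
      have "Pair y -` S \<in> sets (distr M K Z)"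
        by (rule sets_Pair1) (use Sm in simp)
      then show ?thesis by simp
    qed
    define T where "T = g -` (Pair y -` S)"
    have Ts: "T \<in> sets borel" unfolding T_def using measurable_sets[OF gm T's] by simp
    have "emeasure (distr M K Z) (Pair y -` S) = emeasure M (Z -` (Pair y -` S) \<inter> space M)"
      by (rule emeasure_distr[OF rvZ T's])
    also have "Z -` (Pair y -` S) \<inter> space M = X e -` T \<inter> space M" by (auto simp: T_def Zg)
    also have "emeasure M (X e -` T \<inter> space M) = emeasure (distr M borel (X e)) T"
      by (rule emeasure_distr[OF rvX Ts, symmetric])
    finally have eqT: "emeasure (distr M K Z) (Pair y -` S) = emeasure (distr M borel (X e)) T" .
    have gT: "badp E \<delta> e (y(e := t))" if "t \<in> T" for t
      using that by (simp add: T_def S_def g_def)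
    have diam: "t' - t \<le> 2 * real n * \<delta>" if "t \<in> T" "t' \<in> T" "t \<le> t'" for t t'
      using that by (intro bad_diam[OF Esub fin, of \<delta> e y] gT)
    have "emeasure lborel T \<le> ennreal (2 * real n * \<delta>)"
      by (rule diam_measure[OF Ts diam]) (use d in auto)
    then show "emeasure (distr M K Z) (Pair y -` S) \<le> ennreal (\<phi> * (2 * real n * \<delta>))"
      unfolding eqT using dens bound e phi Ts d by (intro dens_bound[of M "X e" "f e"]) auto
  qed
  also have "\<dots> = ennreal (\<phi> * (2 * real n * \<delta>))"
    using PY.emeasure_space_1 by simp
  finally show ?thesis .
qed


lemma mw_meas:
  assumes "C \<subseteq> E" "\<And>e'. e' \<in> E \<Longrightarrow> (\<lambda>x. r x e') \<in> borel_measurable L"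
  shows "(\<lambda>x. mean_weight (r x) C) \<in> borel_measurable L"
  unfolding mean_weight_def using assms by (intro borel_measurable_divide borel_measurable_sum) auto

lemma badp_meas:
  assumes fin: "finite E" and m: "\<And>e'. e' \<in> E \<Longrightarrow> (\<lambda>x. r x e') \<in> borel_measurable L"
  shows "{x \<in> space L. badp E \<delta> e (r x)} \<in> sets L"
proof -
  have fn: "finite (Cn E e)" "finite (Ce E e)"
    using cycles_finite[OF fin] unfolding Cn_def Ce_def by (auto intro: finite_subset)
  have m1: "(\<lambda>x. Min ((\<lambda>C. mean_weight (r x) C) ` Cn E e)) \<in> borel_measurable L"
    using fn m by (intro borel_measurable_Min mw_meas[of _ E]) (auto simp: Cn_def is_cycle_def)
  have m2: "(\<lambda>x. Min ((\<lambda>C. mean_weight (r x) C) ` Ce E e)) \<in> borel_measurable L"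
    using fn m by (intro borel_measurable_Min mw_meas[of _ E]) (auto simp: Ce_def is_cycle_def)
  have "{x \<in> space L. \<bar>Min ((\<lambda>C. mean_weight (r x) C) ` Cn E e) -
        Min ((\<lambda>C. mean_weight (r x) C) ` Ce E e)\<bar> \<le> \<delta>} \<in> sets L"
    using m1 m2 by measurable
  then have "{x \<in> space L. Cn E e \<noteq> {} \<and> Ce E e \<noteq> {} \<and> \<bar>Min ((\<lambda>C. mean_weight (r x) C) ` Cn E e) -
        Min ((\<lambda>C. mean_weight (r x) C) ` Ce E e)\<bar> \<le> \<delta>} \<in> sets L"
    by (cases "Cn E e \<noteq> {} \<and> Ce E e \<noteq> {}") auto
  then show ?thesis unfolding badp_def by simp
qed

lemma good_meas:
  assumes fin: "finite E" and ne: "E \<noteq> {}" and d: "\<delta> \<ge> 0"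
    and m: "\<And>e'. e' \<in> E \<Longrightarrow> (\<lambda>x. r x e') \<in> borel_measurable L"
  shows "{x \<in> space L. \<exists>C. is_cycle E C \<and> ball1 E (r x) \<delta> \<subseteq> PC E C} \<in> sets L"
proof -
  define Cy where "Cy = {C. is_cycle E C}"
  have fCy: "finite Cy" unfolding Cy_def by (rule cycles_finite[OF fin])
  have eq: "{x \<in> space L. \<exists>C. is_cycle E C \<and> ball1 E (r x) \<delta> \<subseteq> PC E C} =
    {x \<in> space L. \<exists>C\<in>Cy. \<forall>C'\<in>Cy. C' \<noteq> C \<longrightarrow> \<delta> * Kc E C C' < mean_weight (r x) C' - mean_weight (r x) C}"
    using char_good[OF fin ne d] unfolding Cy_def by auto
  have mm: "(\<lambda>x. mean_weight (r x) C) \<in> borel_measurable L" if "C \<in> Cy" for C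
    using that m unfolding Cy_def is_cycle_def by (intro mw_meas[of _ E]) auto
  have "{x \<in> space L. \<exists>C\<in>Cy. \<forall>C'\<in>Cy. C' \<noteq> C \<longrightarrow> \<delta> * Kc E C C' < mean_weight (r x) C' - mean_weight (r x) C} \<in> sets L"
  proof (intro sets.sets_Collect_finite_Ex sets.sets_Collect_finite_All fCy)
    fix C C' assume "C \<in> Cy" "C' \<in> Cy"
    then show "{x \<in> space L. C' \<noteq> C \<longrightarrow> \<delta> * Kc E C C' < mean_weight (r x) C' - mean_weight (r x) C} \<in> sets L"
      using mm by measurable
  qed
  then show ?thesis using eq by simp
qed


theorem mainTheorem4:
  fixes n :: nat and E :: "edge set" and \<phi> :: real
    and M :: "'a measure" and X :: "edge \<Rightarrow> 'a \<Rightarrow> real" and f :: "edge \<Rightarrow> real \<Rightarrow> ennreal"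
  assumes n_pos: "n \<ge> 1"
    and E_sub: "E \<subseteq> {..<n} \<times> {..<n}"
    and out_edge: "\<forall>i<n. \<exists>j. (i, j) \<in> E"
    and strongly_connected: "\<forall>i<n. \<forall>j<n. (i, j) \<in> E\<^sup>*"
    and P: "prob_space M"
    and indep: "prob_space.indep_vars M (\<lambda>_. borel) X E"
    and dens: "\<forall>e\<in>E. distributed M lborel (X e) (f e)"
    and bound: "\<forall>e\<in>E. \<forall>y. f e y \<le> ennreal \<phi>"
    and phi_pos: "\<phi> > 0"
  shows "measure M {\<omega> \<in> space M. \<exists>C. is_cycle E C \<and>
            ball1 E (\<lambda>e. X e \<omega>) (1 / (2 * real n ^ 2 * real (card E) * \<phi>)) \<subseteq> PC E C}
         \<ge> 1 - 1 / real n"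
proof -
  interpret prob_space M by (rule P)
  have fin: "finite E" using E_sub finite_subset by blast
  have ne: "E \<noteq> {}" using out_edge n_pos by auto
  have m0: "card E > 0" using fin ne by (simp add: card_gt_0_iff)
  define \<delta> where "\<delta> = 1 / (2 * real n ^ 2 * real (card E) * \<phi>)"
  have d: "\<delta> \<ge> 0" unfolding \<delta>_def using phi_pos by simp
  have key: "\<phi> * (2 * real n * \<delta>) = 1 / (real n * real (card E))"
    unfolding \<delta>_def using phi_pos n_pos m0 by (simp add: field_simps power2_eq_square)
  have Xm: "(\<lambda>\<omega>. X e' \<omega>) \<in> borel_measurable M" if "e' \<in> E" for e'
    using dens that by (auto simp: distributed_def)
  define G where "G = {\<omega> \<in> space M. \<exists>C. is_cycle E C \<and> ball1 E (\<lambda>e. X e \<omega>) \<delta> \<subseteq> PC E C}"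
  define D where "D e = {\<omega> \<in> space M. badp E \<delta> e (\<lambda>e'. X e' \<omega>)}" for e
  have Gm: "G \<in> events" unfolding G_def by (rule good_meas[OF fin ne d]) (use Xm in auto)
  have Dm: "D e \<in> events" for e unfolding D_def by (rule badp_meas[OF fin]) (use Xm in auto)
  have ex: "\<exists>C. is_cycle E C" using cycle_exists[OF E_sub n_pos out_edge] .
  have sub: "space M - G \<subseteq> (\<Union>e\<in>E. D e)"
  proof
    fix \<omega> assume "\<omega> \<in> space M - G"
    then have "\<omega> \<in> space M" "\<not> (\<exists>C. is_cycle E C \<and> ball1 E (\<lambda>e. X e \<omega>) \<delta> \<subseteq> PC E C)"
      unfolding G_def by auto
    then show "\<omega> \<in> (\<Union>e\<in>E. D e)" using bad_cover[OF fin ne d ex] unfolding D_def by blast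
  qed
  have Dle: "prob (D e) \<le> 1 / (real n * real (card E))" if "e \<in> E" for e
  proof -
    have "emeasure M (D e) \<le> ennreal (1 / (real n * real (card E)))"
      using prob_bad_edge[OF P indep dens bound _ E_sub fin that d] phi_pos key unfolding D_def by simp
    then show ?thesis using emeasure_eq_measure[of "D e"] n_pos m0
      by (simp add: ennreal_le_iff)
  qed
  have "prob (space M - G) \<le> prob (\<Union>e\<in>E. D e)"
    using sub Dm by (intro finite_measure_mono) (auto intro: sets.finite_UN[OF fin])
  also have "\<dots> \<le> (\<Sum>e\<in>E. prob (D e))"
    using Dm fin by (intro finite_measure_subadditive_finite) auto
  also have "\<dots> \<le> (\<Sum>e\<in>E. 1 / (real n * real (card E)))" using Dle by (intro sum_mono) auto
  also have "\<dots> = 1 / real n" using m0 by simp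
  finally have "prob (space M - G) \<le> 1 / real n" .
  moreover have "prob (space M - G) = 1 - prob G" using Gm by (rule prob_compl)
  ultimately show ?thesis unfolding G_def \<delta>_def by simp
qed

end
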